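(* Let $F$ be a field and let $R$ be an $F$-algebra which satisfies (NK). Then there exists an $F$-subalgebra $A$ of $R$ which satisfies (NK) and such that $\dim_F(A)\le\omega$ (i.e. $A$ has countable dimension over $F$).
   Context: All rings are associative with unit. A right ideal is nil if all its elements are nilpotent. A ring satisfies the condition (NK) if it contains two nil right ideals whose sum is not nil. *)

theory Defs
  imports Main "HOL.Modules" "HOL-Library.Countable_Set"
begin

definition f_algebra :: "('f::field \<Rightarrow> 'r::ring_1 \<Rightarrow> 'r) \<Rightarrow> bool" where
  "f_algebra scale \<longleftrightarrow> module scale \<and>
     (\<forall>c x y. scale c (x * y) = scale c x * y) \<and>
     (\<forall>c x y. scale c (x * y) = x * scale c y)"

definition subalgebra :: "('f::field \<Rightarrow> 'r::ring_1 \<Rightarrow> 'r) \<Rightarrow> 'r set \<Rightarrow> bool" where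
  "subalgebra scale A \<longleftrightarrow> module.subspace scale A \<and> 1 \<in> A \<and>
     (\<forall>x\<in>A. \<forall>y\<in>A. x * y \<in> A)"

definition right_ideal_in :: "'r::ring_1 set \<Rightarrow> 'r set \<Rightarrow> bool" where
  "right_ideal_in S I \<longleftrightarrow> I \<subseteq> S \<and> 0 \<in> I \<and>
     (\<forall>x\<in>I. \<forall>y\<in>I. x + y \<in> I) \<and> (\<forall>x\<in>I. - x \<in> I) \<and>
     (\<forall>x\<in>I. \<forall>a\<in>S. x * a \<in> I)"

definition nil_set :: "'r::ring_1 set \<Rightarrow> bool" where
  "nil_set I \<longleftrightarrow> (\<forall>x\<in>I. \<exists>n. x ^ n = 0)"

definition NK :: "'r::ring_1 set \<Rightarrow> bool" where
  "NK S \<longleftrightarrow> (\<exists>I J. right_ideal_in S I \<and> right_ideal_in S J \<and> nil_set I \<and> nil_set J \<and>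
     \<not> nil_set {x + y | x y. x \<in> I \<and> y \<in> J})"

end

theory Submission
  imports Defs "HOL.Vector_Spaces"
begin

lemma ri_inter:
  assumes "right_ideal_in UNIV I" "\<forall>x\<in>A. \<forall>y\<in>A. x * y \<in> A" "0 \<in> A"
    "\<forall>x\<in>A. \<forall>y\<in>A. x + y \<in> A" "\<forall>x\<in>A. - x \<in> A"
  shows "right_ideal_in A (I \<inter> A)"
  using assms unfolding right_ideal_in_def by auto

theorem mainTheorem3:
  fixes scale :: "'f::field \<Rightarrow> 'r::ring_1 \<Rightarrow> 'r"
  assumes "f_algebra scale"
    and "NK (UNIV :: 'r set)"
  shows "\<exists>A. subalgebra scale A \<and> NK A \<and>
           (\<exists>B. B \<subseteq> A \<and> countable B \<and> module.independent scale B \<and> module.span scale B = A)"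
proof -
  have M: "module scale" and L: "\<And>c x y. scale c (x * y) = scale c x * y"
    and Rr: "\<And>c x y. scale c (x * y) = x * scale c y"
    using assms(1) unfolding f_algebra_def by auto
  interpret module scale by fact
  interpret V: vector_space scale
    using M unfolding module_def vector_space_def by auto
  obtain I J :: "'r set" where I: "right_ideal_in UNIV I" and J: "right_ideal_in UNIV J"
    and nI: "nil_set I" and nJ: "nil_set J"
    and nn: "\<not> nil_set {x + y | x y. x \<in> I \<and> y \<in> J}"
    using assms(2) unfolding NK_def by blast
  obtain a b where ab: "a \<in> I" "b \<in> J" and np: "\<forall>n. (a + b) ^ n \<noteq> 0"
    using nn unfolding nil_set_def by blast
  define W where "W = prod_list ` lists {a, b}"
  define A where "A = span W"
  have cW: "countable W" unfolding W_def by auto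
  have Wm: "x * y \<in> W" if xW: "x \<in> W" and yW: "y \<in> W" for x y
  proof -
    from xW obtain xs where "xs \<in> lists {a,b}" "x = prod_list xs"
      unfolding W_def by (rule imageE) simp
    moreover from yW obtain ys where "ys \<in> lists {a,b}" "y = prod_list ys"
      unfolding W_def by (rule imageE) simp
    ultimately show ?thesis unfolding W_def
      by (intro image_eqI[of _ _ "xs @ ys"]) auto
  qed
  have aW: "a \<in> W" unfolding W_def by (intro image_eqI[of _ _ "[a]"]) auto
  have bW: "b \<in> W" unfolding W_def by (intro image_eqI[of _ _ "[b]"]) auto
  have oW: "1 \<in> W" unfolding W_def by (intro image_eqI[of _ _ "[]"]) auto
  have Wl: "x * y \<in> A" if "x \<in> W" "y \<in> A" for x y
    using that(2) unfolding A_def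
  proof (induction y rule: span_induct_alt)
    case base then show ?case by (simp add: span_zero)
  next
    case (step c w z)
    have "x * (scale c w + z) = scale c (x * w) + x * z"
      by (simp add: Rr distrib_left)
    then show ?case using step Wm[OF that(1) step(1)]
      by (simp add: span_add span_scale span_base)
  qed
  have Am: "x * y \<in> A" if "x \<in> A" "y \<in> A" for x y
    using that(1) unfolding A_def
  proof (induction x rule: span_induct_alt)
    case base then show ?case by (simp add: span_zero)
  next
    case (step c w z)
    have "(scale c w + z) * y = scale c (w * y) + z * y"
      by (simp add: L distrib_right)
    then show ?case using step Wl[OF step(1) that(2)]
      by (simp add: span_add span_scale A_def)
  qed
  have sub: "subalgebra scale A"
    unfolding subalgebra_def A_def using Am oW by (auto simp: A_def span_base)
  have A0: "0 \<in> A" "\<forall>x\<in>A. \<forall>y\<in>A. x + y \<in> A" "\<forall>x\<in>A. - x \<in> A"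
    unfolding A_def by (auto simp: span_zero span_add span_neg)
  have nk: "NK A"
    unfolding NK_def
  proof (intro exI conjI)
    show "right_ideal_in A (I \<inter> A)" "right_ideal_in A (J \<inter> A)"
      using ri_inter[OF I] ri_inter[OF J] Am A0 by auto
    show "nil_set (I \<inter> A)" "nil_set (J \<inter> A)" using nI nJ unfolding nil_set_def by auto
    have "a \<in> A" "b \<in> A" using aW bW unfolding A_def by (auto simp: span_base)
    then have "a + b \<in> {x + y |x y. x \<in> I \<inter> A \<and> y \<in> J \<inter> A}" using ab by blast
    then show "\<not> nil_set {x + y |x y. x \<in> I \<inter> A \<and> y \<in> J \<inter> A}"
      using np unfolding nil_set_def by blast
  qed
  obtain B where B: "B \<subseteq> W" "independent B" "W \<subseteq> span B"
    using V.maximal_independent_subset[of W] by blast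
  have "span B = A" unfolding A_def
    using B span_mono[of B W] span_minimal[of W "span B"] by auto
  moreover have "B \<subseteq> A" using B unfolding A_def using span_superset by blast
  moreover have "countable B" using B cW countable_subset by blast
  ultimately show ?thesis using sub nk B by blast
qed

end
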